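(* In the setting described in the context, there exists $z^*\in\arg\min_{c'\in[K]\setminus\{c^*\}} P_2(c')$ such that $P_1(z^* )=P_2(z^* )$.
   Context: Let $N_p\ge 1$ and $K\ge 2$ be integers, and write $[m]=\{1,\dots,m\}$. Let real numbers $\rho_i^c$ be given for $i\in[N_p]$ and $c\in[K]$. A vote configuration is a matrix $\tilde V=(\tilde v_i^c)\in\{0,1\}^{N_p\times K}$ with $\sum_{c=1}^K \tilde v_i^c=1$ for every $i\in[N_p]$. Its cost is $O(\tilde V)=\sum_{i=1}^{N_p}\sum_{c=1}^K \rho_i^c\,\tilde v_i^c$. Let $\mathrm{majVote}(\tilde V)$ denote the smallest index among the maximizers of $c\mapsto \sum_{i=1}^{N_p}\tilde v_i^c$. Fix a class $c^*\in[K]$. For $c'\in[K]$ define: - $P_1(c')=\min\{O(\tilde V): \tilde V \text{ a vote configuration with } \sum_{i=1}^{N_p}(\tilde v_i^{c'}-\tilde v_i^{c})\ge \mathbf 1_{c<c'}\ \forall c\in[K]\setminus\{c'\}\}$. The constraint is equivalent to $\mathrm{majVote}(\tilde V)=c'$. - $P_2(c')=\min\{O(\tilde V): \tilde V \text{ a vote configuration with } \sum_{i=1}^{N_p}(\tilde v_i^{c'}-\tilde v_i^{c^*})\ge \mathbf 1_{c^*<c'}\}$. Here $\mathbf 1_{a<b}$ equals $1$ if $a<b$ and $0$ otherwise. *)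

theory Defs
  imports Main "HOL.Real"
begin

text \<open>A vote configuration is a 0/1 matrix indexed by i in [Np], c in [K], with each row
summing to 1. We represent it as a function nat => nat => real, required to be zero outside
[Np] x [K] (so that the set of configurations is finite).\<close>

definition vote_config :: "nat \<Rightarrow> nat \<Rightarrow> (nat \<Rightarrow> nat \<Rightarrow> real) \<Rightarrow> bool" where
  "vote_config Np K V \<longleftrightarrow>
     (\<forall>i c. V i c \<in> {0, 1}) \<and>
     (\<forall>i c. (i \<notin> {1..Np} \<or> c \<notin> {1..K}) \<longrightarrow> V i c = 0) \<and>
     (\<forall>i\<in>{1..Np}. (\<Sum>c=1..K. V i c) = 1)"

definition cost :: "nat \<Rightarrow> nat \<Rightarrow> (nat \<Rightarrow> nat \<Rightarrow> real) \<Rightarrow> (nat \<Rightarrow> nat \<Rightarrow> real) \<Rightarrow> real" where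
  "cost Np K \<rho> V = (\<Sum>i=1..Np. \<Sum>c=1..K. \<rho> i c * V i c)"

definition ind_less :: "nat \<Rightarrow> nat \<Rightarrow> real" where
  "ind_less a b = (if a < b then 1 else 0)"

definition P1 :: "nat \<Rightarrow> nat \<Rightarrow> (nat \<Rightarrow> nat \<Rightarrow> real) \<Rightarrow> nat \<Rightarrow> real" where
  "P1 Np K \<rho> c' = Min (cost Np K \<rho> ` {V. vote_config Np K V \<and>
      (\<forall>c\<in>{1..K} - {c'}. (\<Sum>i=1..Np. V i c' - V i c) \<ge> ind_less c c')})"

definition P2 :: "nat \<Rightarrow> nat \<Rightarrow> (nat \<Rightarrow> nat \<Rightarrow> real) \<Rightarrow> nat \<Rightarrow> nat \<Rightarrow> real" where
  "P2 Np K \<rho> cstar c' = Min (cost Np K \<rho> ` {V. vote_config Np K V \<and>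
      (\<Sum>i=1..Np. V i c' - V i cstar) \<ge> ind_less cstar c'})"

end

theory Submission
  imports Defs
begin

lemma vc_finite: "finite {V. vote_config Np K V}"
proof -
  let ?A = "{1..Np} \<times> {1..K}"
  let ?F = "{f :: nat \<times> nat \<Rightarrow> real. \<forall>x. (x \<in> ?A \<longrightarrow> f x \<in> {0,1}) \<and> (x \<notin> ?A \<longrightarrow> f x = 0)}"
  have "finite ?F" by (rule finite_set_of_finite_funs) auto
  moreover have "{V. vote_config Np K V} \<subseteq> curry ` ?F"
  proof
    fix V assume "V \<in> {V. vote_config Np K V}"
    hence v: "vote_config Np K V" by simp
    have "case_prod V \<in> ?F" using v unfolding vote_config_def by auto
    moreover have "V = curry (case_prod V)" by simp
    ultimately show "V \<in> curry ` ?F" by blast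
  qed
  ultimately show ?thesis by (meson finite_imageI finite_subset)
qed

lemma count_nat:
  assumes "vote_config Np K V"
  shows "(\<Sum>i=1..Np. V i c) = real (card {i\<in>{1..Np}. V i c = 1})"
proof -
  have "(\<Sum>i=1..Np. V i c) = (\<Sum>i=1..Np. if V i c = 1 then 1 else 0)"
    apply (rule sum.cong, simp)
    using assms unfolding vote_config_def by (metis insert_iff singletonD)
  also have "\<dots> = real (card {i\<in>{1..Np}. V i c = 1})"
    by (simp add: sum.If_cases Int_def conj_commute)
  finally show ?thesis .
qed

definition V0 :: "nat \<Rightarrow> nat \<Rightarrow> nat \<Rightarrow> nat \<Rightarrow> real" where
  "V0 Np c0 i c = (if i \<in> {1..Np} \<and> c = c0 then 1 else 0)"

lemma V0_vc: assumes "c0 \<in> {1..K}" shows "vote_config Np K (V0 Np c0)"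
  using assms unfolding vote_config_def V0_def by (auto simp: sum.If_cases)

lemma V0_P2:
  assumes "Np \<ge> 1" "c0 \<in> {1..K}" "c0 \<noteq> cstar"
  shows "(\<Sum>i=1..Np. V0 Np c0 i c0 - V0 Np c0 i cstar) \<ge> ind_less cstar c0"
  using assms unfolding V0_def ind_less_def by simp

theorem lemma1p3:
  fixes Np K cstar :: nat and \<rho> :: "nat \<Rightarrow> nat \<Rightarrow> real"
  assumes "Np \<ge> 1" and "K \<ge> 2" and "cstar \<in> {1..K}"
  shows "\<exists>z. z \<in> {1..K} - {cstar} \<and>
           (\<forall>c'\<in>{1..K} - {cstar}. P2 Np K \<rho> cstar z \<le> P2 Np K \<rho> cstar c') \<and>
           P1 Np K \<rho> z = P2 Np K \<rho> cstar z"
proof -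
  define T2 where "T2 c' = {V. vote_config Np K V \<and>
      (\<Sum>i=1..Np. V i c' - V i cstar) \<ge> ind_less cstar c'}" for c'
  define T1 where "T1 c' = {V. vote_config Np K V \<and>
      (\<forall>c\<in>{1..K} - {c'}. (\<Sum>i=1..Np. V i c' - V i c) \<ge> ind_less c c')}" for c'
  have P2e: "P2 Np K \<rho> cstar c' = Min (cost Np K \<rho> ` T2 c')" for c'
    unfolding P2_def T2_def by simp
  have P1e: "P1 Np K \<rho> c' = Min (cost Np K \<rho> ` T1 c')" for c'
    unfolding P1_def T1_def by simp
  define S where "S = (\<Union>c'\<in>{1..K} - {cstar}. T2 c')"
  have finT2: "finite (T2 c')" for c'
    by (rule finite_subset[OF _ vc_finite[of Np K]]) (auto simp: T2_def)
  have finT1: "finite (T1 c')" for c'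
    by (rule finite_subset[OF _ vc_finite[of Np K]]) (auto simp: T1_def)
  have finS: "finite S" unfolding S_def using finT2 by auto
  have neT2: "V0 Np c' \<in> T2 c'" if "c' \<in> {1..K} - {cstar}" for c'
    using V0_vc[of c' K Np] V0_P2[of Np c' K cstar] that assms unfolding T2_def by auto
  obtain c0 where c0: "c0 \<in> {1..K} - {cstar}"
  proof (cases "cstar = 1")
    case True then show ?thesis using that[of 2] assms by auto
  next
    case False then show ?thesis using that[of 1] assms by auto
  qed
  have neS: "S \<noteq> {}" using neT2[OF c0] c0 unfolding S_def by blast
  have "Min (cost Np K \<rho> ` S) \<in> cost Np K \<rho> ` S"
    using finS neS by (intro Min_in) auto
  then obtain Vs where VsS: "Vs \<in> S" and VsMin: "cost Np K \<rho> Vs = Min (cost Np K \<rho> ` S)"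
    by auto
  have Vs_le: "cost Np K \<rho> Vs \<le> cost Np K \<rho> V" if "V \<in> S" for V
    using VsMin finS that by simp
  from VsS obtain c1 where c1: "c1 \<in> {1..K} - {cstar}" and VsT: "Vs \<in> T2 c1"
    unfolding S_def by blast
  have vcs: "vote_config Np K Vs" using VsT unfolding T2_def by auto
  define cnt where "cnt c = card {i\<in>{1..Np}. Vs i c = 1}" for c
  have cnt_eq: "(\<Sum>i=1..Np. Vs i c) = real (cnt c)" for c
    using count_nat[OF vcs] unfolding cnt_def by simp
  have diff_eq: "(\<Sum>i=1..Np. Vs i a - Vs i b) = real (cnt a) - real (cnt b)" for a b
    by (simp only: sum_subtractf cnt_eq)
  define M where "M = Max (cnt ` {1..K})"
  have M_in: "M \<in> cnt ` {1..K}" unfolding M_def using assms by (intro Max_in) auto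
  have M_ge: "cnt c \<le> M" if "c \<in> {1..K}" for c unfolding M_def using that by simp
  define z where "z = Min {c\<in>{1..K}. cnt c = M}"
  have zin: "z \<in> {c\<in>{1..K}. cnt c = M}" unfolding z_def using M_in by (intro Min_in) auto
  have zmin: "z \<le> c" if "c \<in> {1..K}" "cnt c = M" for c
    unfolding z_def using that by (intro Min_le) auto
  have c1b: "real (cnt c1) - real (cnt cstar) \<ge> ind_less cstar c1"
    using VsT diff_eq[of c1 cstar] unfolding T2_def by simp
  have zne: "z \<noteq> cstar"
  proof
    assume zc: "z = cstar"
    have "cnt c1 \<le> M" using M_ge c1 by auto
    moreover have "cnt cstar = M" using zin zc by auto
    ultimately have "cnt c1 = M" "\<not> cstar < c1" using c1b unfolding ind_less_def
      by (auto split: if_splits)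
    hence "z \<le> c1" "c1 < cstar" using zmin c1 by auto
    thus False using zc by simp
  qed
  have zK: "z \<in> {1..K} - {cstar}" using zin zne by auto
  have VsT1: "Vs \<in> T1 z"
    unfolding T1_def
  proof (intro CollectI conjI ballI)
    fix c assume c: "c \<in> {1..K} - {z}"
    have "cnt c \<le> cnt z" using M_ge c zin by auto
    moreover have "c < z \<Longrightarrow> cnt c < cnt z" using zmin[of c] c zin M_ge[of c] by force
    ultimately show "(\<Sum>i=1..Np. Vs i z - Vs i c) \<ge> ind_less c z"
      unfolding diff_eq ind_less_def by auto
  qed (rule vcs)
  have T12: "T1 z \<subseteq> T2 z" unfolding T1_def T2_def using zK assms(3) by auto
  have P2_att: "P2 Np K \<rho> cstar c' \<in> cost Np K \<rho> ` T2 c'" if "c' \<in> {1..K} - {cstar}" for c'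
    unfolding P2e using neT2[OF that] finT2 by (intro Min_in) auto
  have low: "cost Np K \<rho> Vs \<le> P2 Np K \<rho> cstar c'" if cc: "c' \<in> {1..K} - {cstar}" for c'
  proof -
    obtain V where "V \<in> T2 c'" "P2 Np K \<rho> cstar c' = cost Np K \<rho> V" using P2_att[OF cc] by auto
    moreover have "V \<in> S" using calculation(1) cc unfolding S_def by auto
    ultimately show ?thesis using Vs_le by auto
  qed
  have p1le: "P1 Np K \<rho> z \<le> cost Np K \<rho> Vs"
    unfolding P1e using VsT1 finT1 by simp
  have p21: "P2 Np K \<rho> cstar z \<le> P1 Np K \<rho> z"
    unfolding P1e P2e using VsT1 T12 finT1 finT2
    by (intro Min_antimono) auto
  show ?thesis
    using zK low p1le p21 low[OF zK] by (intro exI[of _ z]) force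
qed

end
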